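(* Suppose that for every $m'\in\mathbb{N}$ there are sequences $(Z_{j,m'})_{j}$ of $\mathcal{C}^\infty$ maps $\mathbb{T}^d\to Gl(n,\mathbb{C})$ and $(F_{j,m'})_j$ of $\mathcal{C}^\infty$ maps $\mathbb{T}^d\to gl(n,\mathbb{C})$ such that $\|Z_{j,m'}^{\pm1}\|^{m'}_{\mathcal{C}^{m'}}\|F_{j,m'}\|_{\mathcal{C}^{m'}}\to0$ as $j\to\infty$. Then there exist sequences $(\tilde Z_j)$ and $(\tilde F_j)$, extracted from these with the same indices (i.e. $\tilde Z_j=Z_{a_j,b_j}$ and $\tilde F_j=F_{a_j,b_j}$ for some indices $(a_j,b_j)$), such that for all $m,r\in\mathbb{N}$, $\|\tilde Z_j^{\pm1}\|^m_{\mathcal{C}^r}\|\tilde F_j\|_{\mathcal{C}^r}\to0$ as $j\to\infty$.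
   Context: $\mathbb{T}^d=\mathbb{R}^d/\mathbb{Z}^d$; $\|\cdot\|$ operator norm, $\|A\|_{\mathcal{C}^0}=\sup_\theta\|A(\theta)\|$, $\|A\|_{\mathcal{C}^r}=\max_{|\alpha|\le r}\|\partial^\alpha A\|_{\mathcal{C}^0}$; conditions with $\pm1$ are required for both the maps and their pointwise inverses. *)

theory Defs
  imports "HOL-Analysis.Analysis"
begin

text \<open>Maps on the torus T^d = R^d / Z^d are represented as Z^d-periodic maps on R^d
  (with R^d = real^'d).\<close>
definition torus_map :: "(real^'d \<Rightarrow> 'b) \<Rightarrow> bool" where
  "torus_map f \<longleftrightarrow> (\<forall>x i. f (x + axis i 1) = f x)"

definition pdiff :: "'d \<Rightarrow> (real^'d \<Rightarrow> 'b::real_normed_vector) \<Rightarrow> real^'d \<Rightarrow> 'b" where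
  "pdiff i f = (\<lambda>x. frechet_derivative f (at x) (axis i 1))"

text \<open>Iterated partial derivative along a list of directions (a multi-index alpha
  with |alpha| = length of the list).\<close>
fun iter_pdiff :: "'d list \<Rightarrow> (real^'d \<Rightarrow> 'b::real_normed_vector) \<Rightarrow> real^'d \<Rightarrow> 'b" where
  "iter_pdiff [] f = f"
| "iter_pdiff (i # is) f = pdiff i (iter_pdiff is f)"

definition smooth_map :: "(real^'d \<Rightarrow> 'b::real_normed_vector) \<Rightarrow> bool" where
  "smooth_map f \<longleftrightarrow> (\<forall>is x. iter_pdiff is f differentiable (at x))"

definition mat_opnorm :: "complex^'n^'n \<Rightarrow> real" where
  "mat_opnorm A = onorm (\<lambda>v. A *v v)"

definition C0_norm :: "(real^'d \<Rightarrow> complex^'n^'n) \<Rightarrow> real" where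
  "C0_norm A = (SUP x. mat_opnorm (A x))"

definition Cr_norm :: "nat \<Rightarrow> (real^'d \<Rightarrow> complex^'n^'n) \<Rightarrow> real" where
  "Cr_norm r A = (SUP is \<in> {is :: 'd list. length is \<le> r}. C0_norm (iter_pdiff is A))"

definition pinv :: "(real^'d \<Rightarrow> complex^'n^'n) \<Rightarrow> real^'d \<Rightarrow> complex^'n^'n" where
  "pinv A = (\<lambda>x. matrix_inv (A x))"

end

theory Submission
  imports Defs
begin


lemma matvec_norm_le:
  fixes A :: "complex^'n^'m"
  shows "norm (A *v v) \<le> (\<Sum>i\<in>UNIV. \<Sum>j\<in>UNIV. norm (A$i$j)) * norm v"
proof -
  have "norm (A *v v) \<le> (\<Sum>i\<in>UNIV. norm ((A *v v)$i))"
    unfolding norm_vec_def by (rule L2_set_le_sum) simp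
  also have "\<dots> \<le> (\<Sum>i\<in>UNIV. \<Sum>j\<in>UNIV. norm (A$i$j) * norm v)"
  proof (rule sum_mono)
    fix i
    have "norm ((A *v v)$i) = norm (\<Sum>j\<in>UNIV. A$i$j * v$j)"
      by (simp add: matrix_vector_mult_def)
    also have "\<dots> \<le> (\<Sum>j\<in>UNIV. norm (A$i$j * v$j))" by (rule norm_sum)
    also have "\<dots> \<le> (\<Sum>j\<in>UNIV. norm (A$i$j) * norm v)"
      by (rule sum_mono) (simp only: norm_mult mult_left_mono[OF Finite_Cartesian_Product.norm_nth_le norm_ge_zero])
    finally show "norm ((A *v v)$i) \<le> (\<Sum>j\<in>UNIV. norm (A$i$j) * norm v)" .
  qed
  finally show ?thesis by (simp add: sum_distrib_right)
qed

lemma matvec_bl: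
  fixes A :: "complex^'n^'m"
  shows "bounded_linear (\<lambda>v. A *v v)"
proof (rule bounded_linear_intro[where K="\<Sum>i\<in>UNIV. \<Sum>j\<in>UNIV. norm (A$i$j)"])
  show "\<And>x y. A *v (x + y) = A *v x + A *v y" by (simp add: matrix_vector_right_distrib)
  show "\<And>r x. A *v (r *\<^sub>R x) = r *\<^sub>R (A *v x)"
    by (simp add: vec_eq_iff matrix_vector_mult_def scaleR_sum_right)
  show "\<And>x. norm (A *v x) \<le> norm x * (\<Sum>i\<in>UNIV. \<Sum>j\<in>UNIV. norm (A$i$j))"
    using matvec_norm_le by (simp add: mult.commute)
qed

lemma mat_opnorm_nonneg: "0 \<le> mat_opnorm A"
  unfolding mat_opnorm_def by (rule onorm_pos_le[OF matvec_bl])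

lemma mat_opnorm_le: "mat_opnorm (A::complex^'n^'n) \<le> (\<Sum>i\<in>UNIV. \<Sum>j\<in>UNIV. norm (A$i$j))"
  unfolding mat_opnorm_def by (rule onorm_le) (rule matvec_norm_le)

lemma mat_opnorm_le_norm: "mat_opnorm (A::complex^'n^'n) \<le> real CARD('n) * real CARD('n) * norm A"
proof -
  have "(\<Sum>i\<in>UNIV. \<Sum>j\<in>UNIV. norm (A$i$j)) \<le> (\<Sum>i\<in>(UNIV::'n set). \<Sum>j\<in>(UNIV::'n set). norm A)"
    by (intro sum_mono) (rule order_trans[OF Finite_Cartesian_Product.norm_nth_le Finite_Cartesian_Product.norm_nth_le])
  then show ?thesis using mat_opnorm_le[of A] by simp
qed

lemma matrix_inv_props:
  fixes A :: "'a::semiring_1^'n^'n"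
  assumes "invertible A"
  shows "A ** matrix_inv A = mat 1 \<and> matrix_inv A ** A = mat 1"
  using assms unfolding invertible_def matrix_inv_def by (rule someI_ex)

lemma mat_opnorm_inv:
  fixes A :: "complex^'n^'n"
  assumes "invertible A"
  shows "1 \<le> mat_opnorm A * mat_opnorm (matrix_inv A)"
proof -
  have "(\<lambda>v. A *v v) \<circ> (\<lambda>v. matrix_inv A *v v) = (\<lambda>v. v)"
    using matrix_inv_props[OF assms] by (auto simp: matrix_vector_mul_assoc)
  then have "onorm (\<lambda>v::complex^'n. v) \<le> mat_opnorm A * mat_opnorm (matrix_inv A)"
    unfolding mat_opnorm_def by (metis onorm_compose matvec_bl)
  then show ?thesis by (simp add: onorm_id)
qed

lemma torus_shift_nat:
  assumes "torus_map f"
  shows "f (x + real n *\<^sub>R axis i 1) = f x \<and> f (x - real n *\<^sub>R axis i 1) = f x"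
proof (induction n arbitrary: x)
  case 0 then show ?case by simp
next
  case (Suc n)
  have e: "\<And>y. f (y + axis i 1) = f y" using assms unfolding torus_map_def by blast
  have 1: "x + real (Suc n) *\<^sub>R axis i 1 = (x + real n *\<^sub>R axis i 1) + axis i 1"
    by (simp add: algebra_simps)
  have 2: "x - real n *\<^sub>R axis i 1 = (x - real (Suc n) *\<^sub>R axis i 1) + axis i 1"
    by (simp add: algebra_simps)
  have "f (x + real (Suc n) *\<^sub>R axis i 1) = f (x + real n *\<^sub>R axis i 1)"
    unfolding 1 by (rule e)
  also have "\<dots> = f x" using Suc.IH[of x] by (rule conjunct1)
  finally have A: "f (x + real (Suc n) *\<^sub>R axis i 1) = f x" .
  have "f (x - real (Suc n) *\<^sub>R axis i 1) = f (x - real n *\<^sub>R axis i 1)"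
    unfolding 2 by (rule e[symmetric])
  also have "\<dots> = f x" using Suc.IH[of x] by (rule conjunct2)
  finally have B: "f (x - real (Suc n) *\<^sub>R axis i 1) = f x" .
  show ?case using A B by (rule conjI)
qed

lemma torus_shift_int:
  assumes "torus_map f"
  shows "f (x + of_int k *\<^sub>R axis i 1) = f x"
proof (cases "k \<ge> 0")
  case True
  have k: "(of_int k::real) = real (nat k)" using True by simp
  have "f (x + real (nat k) *\<^sub>R axis i 1) = f x"
    using torus_shift_nat[OF assms, of x "nat k" i] by (rule conjunct1)
  then show ?thesis unfolding k .
next
  case False
  have k: "(of_int k::real) = - real (nat (-k))" using False by simp
  have e: "x + (- real (nat (-k))) *\<^sub>R axis i 1 = x - real (nat (-k)) *\<^sub>R axis i (1::real)"
    by (simp only: scaleR_minus_left diff_conv_add_uminus)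
  have "f (x - real (nat (-k)) *\<^sub>R axis i 1) = f x"
    using torus_shift_nat[OF assms, of x "nat (-k)" i] by (rule conjunct2)
  then show ?thesis unfolding k e .
qed

lemma torus_shift_sum:
  assumes "torus_map f" "finite S"
  shows "f (x + (\<Sum>i\<in>S. of_int (k i) *\<^sub>R axis i 1)) = f x"
  using assms(2)
proof (induction S arbitrary: x rule: finite_induct)
  case empty then show ?case by simp
next
  case (insert a S)
  have eq: "x + (\<Sum>i\<in>insert a S. of_int (k i) *\<^sub>R axis i 1)
        = (x + of_int (k a) *\<^sub>R axis a 1) + (\<Sum>i\<in>S. of_int (k i) *\<^sub>R axis i 1)"
    using insert(1,2) by (simp add: algebra_simps)
  have "f (x + (\<Sum>i\<in>insert a S. of_int (k i) *\<^sub>R axis i 1))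
     = f (x + of_int (k a) *\<^sub>R axis a 1)" unfolding eq by (rule insert.IH)
  also have "\<dots> = f x" by (rule torus_shift_int[OF assms(1)])
  finally show ?case .
qed

lemma torus_bounded:
  fixes f :: "real^'d \<Rightarrow> 'b::real_normed_vector"
  assumes "torus_map f" "continuous_on UNIV f"
  shows "\<exists>B. \<forall>x. norm (f x) \<le> B"
proof -
  let ?S = "cbox (0::real^'d) (\<chi> i. 1)"
  have "compact (f ` ?S)"
    by (rule compact_continuous_image[OF continuous_on_subset[OF assms(2)]]) auto
  then obtain B where B: "\<And>y. y \<in> ?S \<Longrightarrow> norm (f y) \<le> B"
    using compact_imp_bounded[of "f ` ?S"] unfolding bounded_iff by blast
  have "norm (f x) \<le> B" for x
  proof -
    define v where "v = (\<Sum>i\<in>UNIV. of_int \<lfloor>x$i\<rfloor> *\<^sub>R axis i (1::real))"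
    define y where "y = x - v"
    have vi: "v $ i = of_int \<lfloor>x$i\<rfloor>" for i
    proof -
      have "v $ i = (\<Sum>j\<in>UNIV. of_int \<lfloor>x$j\<rfloor> * (if j = i then 1 else 0))"
        unfolding v_def sum_component by (simp add: axis_def eq_commute)
      also have "\<dots> = of_int \<lfloor>x$i\<rfloor>"
        by (simp add: if_distrib cong: if_cong)
      finally show ?thesis .
    qed
    have "y \<in> ?S"
      unfolding mem_box_cart
    proof
      fix i
      have "y $ i = x$i - of_int \<lfloor>x$i\<rfloor>" by (simp add: y_def vi)
      moreover have "of_int \<lfloor>x$i\<rfloor> \<le> x$i" by (rule of_int_floor_le)
      moreover have "x$i < of_int \<lfloor>x$i\<rfloor> + 1" by (rule real_of_int_floor_add_one_gt)
      ultimately have "0 \<le> y $ i \<and> y $ i \<le> 1" by linarith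
      then show "(0::real^'d) $ i \<le> y $ i \<and> y $ i \<le> (\<chi> i. (1::real)) $ i" by simp
    qed
    have "f x = f (y + v)" by (simp add: y_def)
    also have "\<dots> = f y" unfolding v_def by (rule torus_shift_sum[OF assms(1) finite])
    finally show ?thesis using B[OF \<open>y \<in> ?S\<close>] by simp
  qed
  then show ?thesis by blast
qed

lemma continuous_on_det:
  fixes M :: "'a::topological_space \<Rightarrow> complex^'n^'n"
  assumes "continuous_on S M"
  shows "continuous_on S (\<lambda>x. det (M x))"
  unfolding det_def
  by (intro continuous_intros continuous_on_component assms)

lemma matrix_inv_entry:
  fixes A :: "complex^'n^'n"
  assumes "invertible A"
  shows "matrix_inv A $ k $ l = det (\<chi> i j. if j = k then axis l 1 $ i else A$i$j) / det A"
proof -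
  have d: "det A \<noteq> 0" using assms invertible_det_nz by blast
  have "A *v (matrix_inv A *v axis l 1) = axis l 1"
    using matrix_inv_props[OF assms] by (simp add: matrix_vector_mul_assoc)
  then have "matrix_inv A *v axis l 1 = (\<chi> k. det(\<chi> i j. if j=k then axis l 1 $i else A$i$j) / det A)"
    using cramer[OF d] by blast
  then have "(matrix_inv A *v axis l 1) $ k = det (\<chi> i j. if j = k then axis l 1 $ i else A$i$j) / det A"
    by simp
  moreover have "(matrix_inv A *v axis l 1) $ k = matrix_inv A $ k $ l"
    by (simp add: matrix_vector_mult_def axis_def if_distrib cong: if_cong)
  ultimately show ?thesis by simp
qed

lemma continuous_on_if_const:
  "continuous_on S g \<Longrightarrow> continuous_on S (\<lambda>x. if b then c else g x)"
  by (cases b) (simp_all add: continuous_on_const)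

lemma continuous_on_pinv:
  fixes M :: "real^'d \<Rightarrow> complex^'n^'n"
  assumes "continuous_on UNIV M" "\<And>x. invertible (M x)"
  shows "continuous_on UNIV (pinv M)"
proof -
  have "pinv M = (\<lambda>x. \<chi> k l. det (\<chi> i j. if j = k then axis l 1 $ i else M x$i$j) / det (M x))"
    unfolding pinv_def using matrix_inv_entry[OF assms(2)] by (intro ext) (simp add: vec_eq_iff)
  moreover have "continuous_on UNIV (\<lambda>x. \<chi> k l. det (\<chi> i j. if j = k then axis l 1 $ i else M x$i$j) / det (M x))"
    using assms(2) invertible_det_nz
    by (intro continuous_on_vec_lambda continuous_on_divide continuous_on_det continuous_on_component
        continuous_on_if_const assms(1)) auto
  ultimately show ?thesis by simp
qed

lemma smooth_cont: "smooth_map f \<Longrightarrow> continuous_on UNIV f"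
proof -
  assume "smooth_map f"
  then have "\<And>x. f differentiable (at x)" unfolding smooth_map_def
    by (metis iter_pdiff.simps(1))
  then show ?thesis
    by (intro differentiable_imp_continuous_on differentiable_at_imp_differentiable_on) auto
qed

lemma lists_fin: "finite {is::'d::finite list. length is \<le> r}"
  using finite_lists_length_le[of "UNIV::'d set" r] by simp

lemma Cr_mono:
  fixes A :: "real^'d \<Rightarrow> complex^'n^'n"
  assumes "r \<le> s"
  shows "Cr_norm r A \<le> Cr_norm s A"
  unfolding Cr_norm_def
proof (rule cSUP_subset_mono)
  show "{is::'d list. length is \<le> r} \<noteq> {}" by (metis (mono_tags) empty_iff le0 list.size(3) mem_Collect_eq)
  show "bdd_above ((\<lambda>is. C0_norm (iter_pdiff is A)) ` {is::'d list. length is \<le> s})"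
    by (rule bdd_above_finite) (simp add: lists_fin)
  show "{is::'d list. length is \<le> r} \<subseteq> {is. length is \<le> s}" using assms by auto
qed simp

lemma C0_le_Cr: "C0_norm A \<le> Cr_norm r A"
proof -
  have "C0_norm (iter_pdiff [] A) \<le> Cr_norm r A"
    unfolding Cr_norm_def
    by (rule cSUP_upper) (auto intro!: bdd_above_finite simp: lists_fin)
  then show ?thesis by simp
qed

lemma C0_ge:
  fixes A :: "real^'d \<Rightarrow> complex^'n^'n"
  assumes "\<exists>B. \<forall>x. norm (A x) \<le> B"
  shows "mat_opnorm (A x) \<le> C0_norm A"
proof -
  obtain B where B: "\<And>x. norm (A x) \<le> B" using assms by blast
  have "\<And>y. mat_opnorm (A y) \<le> real CARD('n) * real CARD('n) * B"
    using mat_opnorm_le_norm B by (meson mult_left_mono of_nat_0_le_iff order_trans zero_le_mult_iff)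
  then show ?thesis unfolding C0_norm_def
    by (intro cSUP_upper) (auto simp: bdd_above_def)
qed

lemma Cr_ge:
  fixes A :: "real^'d \<Rightarrow> complex^'n^'n"
  assumes "\<exists>B. \<forall>x. norm (A x) \<le> B"
  shows "mat_opnorm (A x) \<le> Cr_norm r A" "0 \<le> Cr_norm r A"
  using C0_ge[OF assms, of x] C0_le_Cr[of A r] mat_opnorm_nonneg[of "A x"] by linarith+

lemma key_bound:
  fixes x X Y w W :: real
  assumes "0 \<le> x" "x \<le> X" "0 \<le> w" "w \<le> W" "m \<le> k" "1 \<le> X \<or> 1 \<le> Y" "0 \<le> Y"
  shows "x^m * w \<le> X^k * W + Y^k * W"
proof -
  define M where "M = max 1 X"
  have M1: "1 \<le> M" by (simp add: M_def)
  have W0: "0 \<le> W" using assms(3,4) by linarith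
  have "x \<le> M" using assms(2) by (simp add: M_def)
  then have "x^m \<le> M^m" using assms(1) by (rule power_mono)
  also have "\<dots> \<le> M^k" using assms(5) M1 by (rule power_increasing)
  finally have xm: "x^m \<le> M^k" .
  have "x^m * w \<le> M^k * W"
    using M1 assms(3) by (intro mult_mono[OF xm assms(4)]) simp_all
  moreover have "M^k * W \<le> X^k * W + Y^k * W"
  proof (cases "1 \<le> X")
    case True
    then have "M = X" by (simp add: M_def)
    moreover have "0 \<le> Y^k * W" using assms(7) W0 by simp
    ultimately show ?thesis by simp
  next
    case False
    then have "M = 1" "1 \<le> Y" using assms(6) by (auto simp: M_def)
    moreover have "1 \<le> Y^k" using \<open>1 \<le> Y\<close> by (rule one_le_power)
    then have "1 * W \<le> Y^k * W" using W0 by (rule mult_right_mono)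
    moreover have "0 \<le> X^k * W" using assms(1,2) W0 by simp
    ultimately show ?thesis by simp
  qed
  ultimately show ?thesis by linarith
qed

lemma torus_pinv: "torus_map M \<Longrightarrow> torus_map (pinv M)"
  unfolding torus_map_def pinv_def by simp

lemma sandwich:
  fixes s :: "nat \<Rightarrow> real"
  assumes "\<And>k. k \<ge> N \<Longrightarrow> 0 \<le> s k \<and> s k \<le> 2 * inverse (real (Suc k))"
  shows "s \<longlonglongrightarrow> 0"
proof (rule tendsto_sandwich[where f="\<lambda>_. 0" and h="\<lambda>k. 2 * inverse (real (Suc k))"])
  show "\<forall>\<^sub>F n in sequentially. 0 \<le> s n" using assms eventually_sequentially by blast
  show "\<forall>\<^sub>F n in sequentially. s n \<le> 2 * inverse (real (Suc n))" using assms eventually_sequentially by blast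
  show "(\<lambda>k. 2 * inverse (real (Suc k))) \<longlonglongrightarrow> 0"
    using tendsto_mult_right_zero[OF LIMSEQ_inverse_real_of_nat, of 2] by simp
qed simp

theorem lemma24:
  fixes Z F :: "nat \<Rightarrow> nat \<Rightarrow> real^'d \<Rightarrow> complex^'n^'n"
  assumes Z_GL: "\<forall>j m'. torus_map (Z j m') \<and> smooth_map (Z j m') \<and> (\<forall>x. invertible (Z j m' x))"
    and F_gl: "\<forall>j m'. torus_map (F j m') \<and> smooth_map (F j m')"
    and Z_lim: "\<forall>m'. (\<lambda>j. Cr_norm m' (Z j m') ^ m' * Cr_norm m' (F j m')) \<longlonglongrightarrow> 0"
    and Zinv_lim: "\<forall>m'. (\<lambda>j. Cr_norm m' (pinv (Z j m')) ^ m' * Cr_norm m' (F j m')) \<longlonglongrightarrow> 0"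
  shows "\<exists>a b :: nat \<Rightarrow> nat. \<forall>m r.
           (\<lambda>j. Cr_norm r (Z (a j) (b j)) ^ m * Cr_norm r (F (a j) (b j))) \<longlonglongrightarrow> 0 \<and>
           (\<lambda>j. Cr_norm r (pinv (Z (a j) (b j))) ^ m * Cr_norm r (F (a j) (b j))) \<longlonglongrightarrow> 0"
proof -
  have bZ: "\<exists>B. \<forall>x. norm (Z j m' x) \<le> B" for j m'
    using Z_GL torus_bounded smooth_cont by blast
  have bF: "\<exists>B. \<forall>x. norm (F j m' x) \<le> B" for j m'
    using F_gl torus_bounded smooth_cont by blast
  have bP: "\<exists>B. \<forall>x. norm (pinv (Z j m') x) \<le> B" for j m'
    using Z_GL torus_bounded torus_pinv continuous_on_pinv smooth_cont by metis
  have one: "1 \<le> Cr_norm r (Z j m') \<or> 1 \<le> Cr_norm r (pinv (Z j m'))" for r j m'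
  proof -
    let ?A = "Z j m' 0"
    have "1 \<le> mat_opnorm ?A * mat_opnorm (matrix_inv ?A)"
      using Z_GL mat_opnorm_inv by blast
    moreover have "mat_opnorm ?A \<le> Cr_norm r (Z j m')" using Cr_ge(1)[OF bZ] by blast
    moreover have "mat_opnorm (matrix_inv ?A) \<le> Cr_norm r (pinv (Z j m'))"
      using Cr_ge(1)[OF bP, of j m' 0 r] by (simp add: pinv_def)
    moreover have "0 \<le> mat_opnorm ?A" "0 \<le> mat_opnorm (matrix_inv ?A)" by (rule mat_opnorm_nonneg)+
    ultimately have "1 \<le> Cr_norm r (Z j m') * Cr_norm r (pinv (Z j m'))"
      by (meson mult_mono order_trans)
    moreover have "0 \<le> Cr_norm r (Z j m')" "0 \<le> Cr_norm r (pinv (Z j m'))"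
      using Cr_ge(2)[OF bZ] Cr_ge(2)[OF bP] by blast+
    moreover have "Cr_norm r (Z j m') * Cr_norm r (pinv (Z j m')) \<le> Cr_norm r (Z j m')"
      if "Cr_norm r (pinv (Z j m')) < 1"
      using that \<open>0 \<le> Cr_norm r (Z j m')\<close> by (simp add: mult_left_le)
    ultimately show ?thesis by linarith
  qed
  have "\<forall>k. \<exists>j. Cr_norm k (Z j k) ^ k * Cr_norm k (F j k) < inverse (real (Suc k)) \<and>
                 Cr_norm k (pinv (Z j k)) ^ k * Cr_norm k (F j k) < inverse (real (Suc k))"
  proof
    fix k
    have pos: "(0::real) < inverse (real (Suc k))" by simp
    have "\<forall>\<^sub>F j in sequentially. Cr_norm k (Z j k) ^ k * Cr_norm k (F j k) < inverse (real (Suc k)) \<and>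
                 Cr_norm k (pinv (Z j k)) ^ k * Cr_norm k (F j k) < inverse (real (Suc k))"
      using order_tendstoD(2)[OF Z_lim[rule_format, of k] pos] order_tendstoD(2)[OF Zinv_lim[rule_format, of k] pos]
      by (rule eventually_conj)
    then show "\<exists>j. Cr_norm k (Z j k) ^ k * Cr_norm k (F j k) < inverse (real (Suc k)) \<and>
                 Cr_norm k (pinv (Z j k)) ^ k * Cr_norm k (F j k) < inverse (real (Suc k))"
      unfolding eventually_sequentially by blast
  qed
  then obtain a where a: "\<And>k. Cr_norm k (Z (a k) k) ^ k * Cr_norm k (F (a k) k) < inverse (real (Suc k)) \<and>
                 Cr_norm k (pinv (Z (a k) k)) ^ k * Cr_norm k (F (a k) k) < inverse (real (Suc k))"
    by metis
  have "(\<lambda>j. Cr_norm r (Z (a j) j) ^ m * Cr_norm r (F (a j) j)) \<longlonglongrightarrow> 0 \<and>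
        (\<lambda>j. Cr_norm r (pinv (Z (a j) j)) ^ m * Cr_norm r (F (a j) j)) \<longlonglongrightarrow> 0" for m r
  proof
    show "(\<lambda>j. Cr_norm r (Z (a j) j) ^ m * Cr_norm r (F (a j) j)) \<longlonglongrightarrow> 0"
    proof (rule sandwich[where N="max m r"])
      fix k assume k: "max m r \<le> k"
      have "Cr_norm r (Z (a k) k) ^ m * Cr_norm r (F (a k) k)
            \<le> Cr_norm k (Z (a k) k) ^ k * Cr_norm k (F (a k) k) + Cr_norm k (pinv (Z (a k) k)) ^ k * Cr_norm k (F (a k) k)"
        using k by (intro key_bound Cr_ge(2)[OF bZ] Cr_ge(2)[OF bF] Cr_ge(2)[OF bP] Cr_mono one) auto
      then show "0 \<le> Cr_norm r (Z (a k) k) ^ m * Cr_norm r (F (a k) k) \<and>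
            Cr_norm r (Z (a k) k) ^ m * Cr_norm r (F (a k) k) \<le> 2 * inverse (real (Suc k))"
        using a[of k] Cr_ge(2)[OF bZ] Cr_ge(2)[OF bF] by (smt (verit) zero_le_mult_iff zero_le_power)
    qed
    show "(\<lambda>j. Cr_norm r (pinv (Z (a j) j)) ^ m * Cr_norm r (F (a j) j)) \<longlonglongrightarrow> 0"
    proof (rule sandwich[where N="max m r"])
      fix k assume k: "max m r \<le> k"
      have "Cr_norm r (pinv (Z (a k) k)) ^ m * Cr_norm r (F (a k) k)
            \<le> Cr_norm k (pinv (Z (a k) k)) ^ k * Cr_norm k (F (a k) k) + Cr_norm k (Z (a k) k) ^ k * Cr_norm k (F (a k) k)"
        using k one[of k "a k" k] by (intro key_bound Cr_ge(2)[OF bP] Cr_ge(2)[OF bF] Cr_ge(2)[OF bZ] Cr_mono) auto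
      then show "0 \<le> Cr_norm r (pinv (Z (a k) k)) ^ m * Cr_norm r (F (a k) k) \<and>
            Cr_norm r (pinv (Z (a k) k)) ^ m * Cr_norm r (F (a k) k) \<le> 2 * inverse (real (Suc k))"
        using a[of k] Cr_ge(2)[OF bP] Cr_ge(2)[OF bF] by (smt (verit) zero_le_mult_iff zero_le_power)
    qed
  qed
  then show ?thesis by (intro exI[of _ a] exI[of _ "\<lambda>k. k"]) simp
qed

end
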